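(* For every rectangle $R \subset \mathbb{R}^2$, $$\textup{Var}\Big( \mathbb{P}\big( H_R \,|\, \eta \big) \Big) \, \leqslant \, \sum_{m=1}^n \mathbb{E}\big[ \textup{Inf}_m( f_R^\eta )^2 \big].$$
   Context: Let $R$ be a rectangle with sides parallel to the axes, let $\eta = \{\eta_1,\ldots,\eta_n\}$ be $n$ points chosen independently and uniformly at random in $R$, and let $\omega \colon \eta \to \{-1,1\}$ be a uniformly random colouring. The Voronoi cell of $u \in \eta$ is $C(u) = \{ x \in R : \|u - x\|_2 \leqslant \|v - x\|_2 \ \forall v \in \eta\}$; it is red if $\omega(u)=1$ and blue if $\omega(u)=-1$. $H_R$ is the event that there is a path in $R$ from its left-hand side to its right-hand side intersecting only red cells, and $f_R^\eta \colon \{-1,1\}^\eta \to \{0,1\}$ is the indicator function of $H_R$ for the tiling given by $\eta$. The influence is $\textup{Inf}_m(f_R^\eta) = \mathbb{P}( f_R^\eta(\omega) \neq f_R^\eta(\omega') \,|\, \eta )$, where $\omega'$ equals $\omega$ except that the colour of $\eta_m$ is flipped. *)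

theory Defs
  imports "HOL-Probability.Probability"
begin

type_synonym point = "real \<times> real"

definition rect :: "real \<Rightarrow> real \<Rightarrow> real \<Rightarrow> real \<Rightarrow> point set" where
  "rect a b c d = {a..b} \<times> {c..d}"

text \<open>Voronoi cell (within R) of the m-th point of the configuration eta (n points
  eta 0, ..., eta (n-1)); the norm on real * real is the Euclidean norm.\<close>
definition voronoi_cell :: "point set \<Rightarrow> nat \<Rightarrow> (nat \<Rightarrow> point) \<Rightarrow> nat \<Rightarrow> point set" where
  "voronoi_cell R n eta m = {x \<in> R. \<forall>v<n. norm (eta m - x) \<le> norm (eta v - x)}"

text \<open>Colourings: omega i \<in> {-1,1} for i < n (1 = red, -1 = blue).\<close>
definition colourings :: "nat \<Rightarrow> (nat \<Rightarrow> int) set" where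
  "colourings n = PiE {..<n} (\<lambda>_. {-1, 1})"

definition crossing :: "real \<Rightarrow> real \<Rightarrow> real \<Rightarrow> real \<Rightarrow> nat \<Rightarrow> (nat \<Rightarrow> point) \<Rightarrow> (nat \<Rightarrow> int) \<Rightarrow> bool" where
  "crossing a b c d n eta omega \<longleftrightarrow>
     (\<exists>\<gamma>. path \<gamma> \<and> path_image \<gamma> \<subseteq> rect a b c d \<and>
        pathstart \<gamma> \<in> {a} \<times> {c..d} \<and> pathfinish \<gamma> \<in> {b} \<times> {c..d} \<and>
        (\<forall>m<n. path_image \<gamma> \<inter> voronoi_cell (rect a b c d) n eta m \<noteq> {} \<longrightarrow> omega m = 1))"

definition fR :: "real \<Rightarrow> real \<Rightarrow> real \<Rightarrow> real \<Rightarrow> nat \<Rightarrow> (nat \<Rightarrow> point) \<Rightarrow> (nat \<Rightarrow> int) \<Rightarrow> real" where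
  "fR a b c d n eta omega = (if crossing a b c d n eta omega then 1 else 0)"

definition cond_prob_H :: "real \<Rightarrow> real \<Rightarrow> real \<Rightarrow> real \<Rightarrow> nat \<Rightarrow> (nat \<Rightarrow> point) \<Rightarrow> real" where
  "cond_prob_H a b c d n eta =
     (\<Sum>\<omega>\<in>colourings n. fR a b c d n eta \<omega>) / real (card (colourings n))"

definition flip :: "nat \<Rightarrow> (nat \<Rightarrow> int) \<Rightarrow> nat \<Rightarrow> int" where
  "flip m omega = omega(m := - omega m)"

definition influence :: "real \<Rightarrow> real \<Rightarrow> real \<Rightarrow> real \<Rightarrow> nat \<Rightarrow> nat \<Rightarrow> (nat \<Rightarrow> point) \<Rightarrow> real" where
  "influence a b c d n m eta =
     real (card {\<omega>\<in>colourings n. fR a b c d n eta \<omega> \<noteq> fR a b c d n eta (flip m \<omega>)})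
     / real (card (colourings n))"

definition point_measure :: "real \<Rightarrow> real \<Rightarrow> real \<Rightarrow> real \<Rightarrow> nat \<Rightarrow> (nat \<Rightarrow> point) measure" where
  "point_measure a b c d n = PiM {..<n} (\<lambda>_. uniform_measure lborel (rect a b c d))"

end

theory Submission
  imports Defs
begin


lemma bdd_integrable:
  assumes "prob_space U" "f \<in> borel_measurable U" "\<forall>x\<in>space U. \<bar>f x\<bar> \<le> (B::real)"
  shows "integrable U f"
proof -
  interpret prob_space U by fact
  show ?thesis using assms(2,3) by (intro integrable_const_bound[of _ B]) auto
qed

lemma var_min:
  fixes Z :: "'b \<Rightarrow> real"
  assumes "prob_space U" "Z \<in> borel_measurable U" "\<forall>x\<in>space U. \<bar>Z x\<bar> \<le> B"
  shows "(\<integral>y. (Z y)\<^sup>2 \<partial>U) - (\<integral>y. Z y \<partial>U)\<^sup>2 \<le> (\<integral>y. (Z y - c)\<^sup>2 \<partial>U)"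
proof -
  interpret prob_space U by fact
  have i1: "integrable U Z" using bdd_integrable assms by blast
  have i2: "integrable U (\<lambda>y. (Z y)\<^sup>2)"
    using assms by (intro bdd_integrable[of _ _ "B^2"]) (auto, metis abs_ge_zero power2_abs power_mono)
  have "(\<integral>y. (Z y - c)\<^sup>2 \<partial>U) = (\<integral>y. (Z y)\<^sup>2 - 2 * c * Z y + c^2 \<partial>U)"
    by (simp add: power2_diff algebra_simps)
  also have "\<dots> = (\<integral>y. (Z y)\<^sup>2 \<partial>U) - 2 * c * (\<integral>y. Z y \<partial>U) + c^2"
    using i1 i2 by (simp add: prob_space)
  finally have "(\<integral>y. (Z y - c)\<^sup>2 \<partial>U) = (\<integral>y. (Z y)\<^sup>2 \<partial>U) - 2 * c * (\<integral>y. Z y \<partial>U) + c^2" .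
  moreover have "0 \<le> ((\<integral>y. Z y \<partial>U) - c)\<^sup>2" by simp
  ultimately show ?thesis by (simp add: power2_diff algebra_simps)
qed

lemma bdd_int:
  fixes Z :: "'b \<Rightarrow> real"
  assumes "prob_space U" "Z \<in> borel_measurable U" "\<forall>x\<in>space U. \<bar>Z x\<bar> \<le> B"
  shows "\<bar>\<integral>y. Z y \<partial>U\<bar> \<le> B"
proof -
  interpret prob_space U by fact
  have i: "integrable U Z" using bdd_integrable assms by blast
  have "(\<integral>y. Z y \<partial>U) \<le> B" using assms(3) by (intro integral_le_const[OF i] AE_I2) auto
  moreover have "-B \<le> (\<integral>y. Z y \<partial>U)" using assms(3) by (intro integral_ge_const[OF i] AE_I2) auto
  ultimately show ?thesis by auto
qed

definition bddon :: "'a measure \<Rightarrow> ('a \<Rightarrow> real) \<Rightarrow> real \<Rightarrow> bool" where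
  "bddon M f B \<longleftrightarrow> f \<in> borel_measurable M \<and> (\<forall>x\<in>space M. \<bar>f x\<bar> \<le> B)"

lemma bddon_sq:
  assumes "bddon M f B" "bddon M g B"
  shows "bddon M (\<lambda>x. (f x - g x)\<^sup>2) ((2*B)^2)" "bddon M (\<lambda>x. (f x)\<^sup>2) (B^2)"
proof -
  show "bddon M (\<lambda>x. (f x - g x)\<^sup>2) ((2*B)^2)"
    using assms unfolding bddon_def
  proof (safe, goal_cases)
    case (2 x)
    have "\<bar>f x - g x\<bar> \<le> 2*B" using 2 by (smt (verit))
    then have "\<bar>f x - g x\<bar>^2 \<le> (2*B)^2" by (intro power_mono) auto
    then show ?case by simp
  qed auto
  show "bddon M (\<lambda>x. (f x)\<^sup>2) (B^2)"
    using assms unfolding bddon_def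
    apply auto
    by (metis abs_ge_zero power2_abs power_mono)
qed

lemma upd_space:
  assumes "x \<in> space (PiM {..<n} (\<lambda>_. U))" "y \<in> space U"
  shows "x(n:=y) \<in> space (PiM {..<Suc n} (\<lambda>_. U))"
  using assms by (auto simp: space_PiM PiE_def extensional_def Pi_def)

lemma upd_meas:
  "(\<lambda>p. (fst p)(n := snd p)) \<in> measurable (PiM {..<n} (\<lambda>_. U) \<Otimes>\<^sub>M U) (PiM {..<Suc n} (\<lambda>_. U))"
  by (rule measurable_fun_upd[where J="{..<n}"]) auto

lemma upd_comp:
  assumes "h \<in> borel_measurable (PiM {..<Suc n} (\<lambda>_. U))"
  shows "(\<lambda>p. h ((fst p)(n := snd p))) \<in> borel_measurable (PiM {..<n} (\<lambda>_. U) \<Otimes>\<^sub>M U)"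
proof -
  have "(\<lambda>p. h ((fst p)(n := snd p))) = h \<circ> (\<lambda>p. (fst p)(n := snd p))" by (simp add: comp_def)
  then show ?thesis using measurable_comp[OF upd_meas[of n U] assms] by simp
qed

lemma inner_meas:
  fixes h :: "(nat \<Rightarrow> 'a) \<Rightarrow> real"
  assumes "prob_space U" "h \<in> borel_measurable (PiM {..<Suc n} (\<lambda>_. U))"
  shows "(\<lambda>x. \<integral>y. h (x(n:=y)) \<partial>U) \<in> borel_measurable (PiM {..<n} (\<lambda>_. U))"
proof -
  interpret prob_space U by fact
  have "(\<lambda>p. h ((fst p)(n := snd p))) \<in> borel_measurable (PiM {..<n} (\<lambda>_. U) \<Otimes>\<^sub>M U)"
    using upd_comp assms(2) by blast
  then have "case_prod (\<lambda>x y. h (x(n:=y))) \<in> borel_measurable (PiM {..<n} (\<lambda>_. U) \<Otimes>\<^sub>M U)"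
    by (simp add: case_prod_beta')
  from borel_measurable_lebesgue_integral[of "\<lambda>x y. h (x(n:=y))", OF this] show ?thesis by simp
qed

lemma inner_bdd:
  assumes "prob_space U" "bddon (PiM {..<Suc n} (\<lambda>_. U)) h B"
  shows "bddon (PiM {..<n} (\<lambda>_. U)) (\<lambda>x. \<integral>y. h (x(n:=y)) \<partial>U) B"
  unfolding bddon_def
proof safe
  show "(\<lambda>x. \<integral>y. h (x(n:=y)) \<partial>U) \<in> borel_measurable (PiM {..<n} (\<lambda>_. U))"
    using inner_meas assms unfolding bddon_def by blast
  fix x assume x: "x \<in> space (PiM {..<n} (\<lambda>_. U))"
  have "(\<lambda>p. h ((fst p)(n := snd p))) \<in> borel_measurable (PiM {..<n} (\<lambda>_. U) \<Otimes>\<^sub>M U)"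
    using upd_comp assms(2) unfolding bddon_def by blast
  from measurable_Pair2[OF this x] have "(\<lambda>y. h (x(n:=y))) \<in> borel_measurable U"
    by simp
  then show "\<bar>\<integral>y. h (x(n:=y)) \<partial>U\<bar> \<le> B"
    using assms x upd_space[OF x] unfolding bddon_def by (intro bdd_int) auto
qed

lemma inner_int:
  assumes "prob_space U" "bddon (PiM {..<Suc n} (\<lambda>_. U)) h B"
  shows "(\<integral>x. h x \<partial>PiM {..<Suc n} (\<lambda>_. U)) = (\<integral>x. (\<integral>y. h (x(n:=y)) \<partial>U) \<partial>PiM {..<n} (\<lambda>_. U))"
proof -
  interpret PS: product_sigma_finite "\<lambda>_. U"
    by (intro product_sigma_finite.intro) (simp add: assms(1) prob_space_imp_sigma_finite)
  have e: "{..<Suc n} = insert n {..<n}" by auto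
  have ps: "prob_space (PiM {..<Suc n} (\<lambda>_. U))" using assms(1) by (intro prob_space_PiM) auto
  have "integrable (PiM (insert n {..<n}) (\<lambda>_. U)) h"
    using bdd_integrable[OF ps] assms(2) unfolding bddon_def e by blast
  from PS.product_integral_insert[OF _ _ this] show ?thesis by (simp add: e)
qed

lemma inner_bdd_pt:
  assumes "prob_space U" "bddon (PiM {..<Suc n} (\<lambda>_. U)) h B" "x \<in> space (PiM {..<n} (\<lambda>_. U))"
  shows "(\<lambda>y. h (x(n:=y))) \<in> borel_measurable U" "\<forall>y\<in>space U. \<bar>h (x(n:=y))\<bar> \<le> B"
proof -
  have "(\<lambda>p. h ((fst p)(n := snd p))) \<in> borel_measurable (PiM {..<n} (\<lambda>_. U) \<Otimes>\<^sub>M U)"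
    using upd_comp assms(2) unfolding bddon_def by blast
  from measurable_Pair2[OF this assms(3)] show "(\<lambda>y. h (x(n:=y))) \<in> borel_measurable U"
    by simp
  show "\<forall>y\<in>space U. \<bar>h (x(n:=y))\<bar> \<le> B"
    using assms upd_space[OF assms(3)] unfolding bddon_def by auto
qed

lemma jensen_sq:
  fixes Z :: "'b \<Rightarrow> real"
  assumes "prob_space U" "Z \<in> borel_measurable U" "\<forall>x\<in>space U. \<bar>Z x\<bar> \<le> B"
  shows "(\<integral>y. Z y \<partial>U)\<^sup>2 \<le> (\<integral>y. (Z y)\<^sup>2 \<partial>U)"
proof -
  interpret prob_space U by fact
  have i1: "integrable U Z" using bdd_integrable assms by blast
  have i2: "integrable U (\<lambda>y. (Z y)\<^sup>2)"
    using assms by (intro bdd_integrable[of _ _ "B^2"]) (auto, metis abs_ge_zero power2_abs power_mono)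
  define c where "c = (\<integral>y. Z y \<partial>U)"
  have "(\<integral>y. (Z y - c)\<^sup>2 \<partial>U) = (\<integral>y. (Z y)\<^sup>2 - 2 * c * Z y + c^2 \<partial>U)"
    by (simp add: power2_diff algebra_simps)
  also have "\<dots> = (\<integral>y. (Z y)\<^sup>2 \<partial>U) - 2 * c * (\<integral>y. Z y \<partial>U) + c^2"
    using i1 i2 by (simp add: prob_space)
  finally have "(\<integral>y. (Z y - c)\<^sup>2 \<partial>U) = (\<integral>y. (Z y)\<^sup>2 \<partial>U) - 2 * c * (\<integral>y. Z y \<partial>U) + c^2" .
  moreover have "0 \<le> (\<integral>y. (Z y - c)\<^sup>2 \<partial>U)" by simp
  ultimately show ?thesis by (simp add: c_def power2_eq_square)
qed

lemma bddon_integrable: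
  assumes "prob_space M" "bddon M f B" shows "integrable M f"
  using assms bdd_integrable unfolding bddon_def by blast

lemma efron_stein:
  fixes n :: nat and F :: "(nat \<Rightarrow> 'a) \<Rightarrow> real" and G :: "nat \<Rightarrow> (nat \<Rightarrow> 'a) \<Rightarrow> real"
  assumes U: "prob_space U"
  shows "bddon (PiM {..<n} (\<lambda>_. U)) F B \<Longrightarrow>
    (\<And>m. m<n \<Longrightarrow> bddon (PiM {..<n} (\<lambda>_. U)) (G m) B) \<Longrightarrow>
    (\<And>m x y. m<n \<Longrightarrow> x \<in> space (PiM {..<n} (\<lambda>_. U)) \<Longrightarrow> y \<in> space U \<Longrightarrow> G m (x(m:=y)) = G m x) \<Longrightarrow>
    (\<integral>x. (F x)\<^sup>2 \<partial>PiM {..<n} (\<lambda>_. U)) - (\<integral>x. F x \<partial>PiM {..<n} (\<lambda>_. U))\<^sup>2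
      \<le> (\<Sum>m<n. \<integral>x. (F x - G m x)\<^sup>2 \<partial>PiM {..<n} (\<lambda>_. U))"
proof (induction n arbitrary: F G)
  case 0
  show ?case by (simp add: PiM_empty lebesgue_integral_count_space_finite)
next
  case (Suc n)
  let ?P = "PiM {..<n} (\<lambda>_. U)" and ?Q = "PiM {..<Suc n} (\<lambda>_. U)"
  interpret U: prob_space U by fact
  have psP: "prob_space ?P" using U by (intro prob_space_PiM) auto
  define Fb where "Fb x = (\<integral>y. F (x(n:=y)) \<partial>U)" for x
  define Gb where "Gb m x = (\<integral>y. G m (x(n:=y)) \<partial>U)" for m x
  have bF: "bddon ?Q F B" by fact
  have bG: "\<And>m. m < Suc n \<Longrightarrow> bddon ?Q (G m) B" by fact
  have bFb: "bddon ?P Fb B" unfolding Fb_def using inner_bdd[OF U bF] .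
  have bGb: "\<And>m. m<n \<Longrightarrow> bddon ?P (Gb m) B" unfolding Gb_def using inner_bdd[OF U bG] by auto
  have indGb: "Gb m (x(m:=y)) = Gb m x" if m: "m<n" and x: "x \<in> space ?P" and y: "y \<in> space U" for m x y
  proof -
    have "G m (x(m:=y,n:=z)) = G m (x(n:=z))" if z: "z \<in> space U" for z
    proof -
      have eq: "x(m:=y,n:=z) = (x(n:=z))(m:=y)" using m by (auto simp: fun_upd_twist)
      have *: "G m ((x(n:=z))(m:=y)) = G m (x(n:=z))"
        by (rule Suc.prems(3)) (use m upd_space[OF x z] y in \<open>auto simp del: fun_upd_apply\<close>)
      show ?thesis unfolding eq by (rule *)
    qed
    then show "Gb m (x(m:=y)) = Gb m x" unfolding Gb_def by (intro Bochner_Integration.integral_cong) auto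
  qed
  have IH: "(\<integral>x. (Fb x)\<^sup>2 \<partial>?P) - (\<integral>x. Fb x \<partial>?P)\<^sup>2 \<le> (\<Sum>m<n. \<integral>x. (Fb x - Gb m x)\<^sup>2 \<partial>?P)"
    using Suc.IH[of Fb Gb] bFb bGb indGb by blast
  have e1: "(\<integral>x. F x \<partial>?Q) = (\<integral>x. Fb x \<partial>?P)" unfolding Fb_def using inner_int[OF U bF] .
  have e2: "(\<integral>x. (F x)\<^sup>2 \<partial>?Q) = (\<integral>x. (\<integral>y. (F (x(n:=y)))\<^sup>2 \<partial>U) \<partial>?P)"
    using inner_int[OF U bddon_sq(2)[OF bF bF]] .
  have e3: "(\<integral>x. (F x - G m x)\<^sup>2 \<partial>?Q) = (\<integral>x. (\<integral>y. (F (x(n:=y)) - G m (x(n:=y)))\<^sup>2 \<partial>U) \<partial>?P)"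
    if "m < Suc n" for m
    using inner_int[OF U bddon_sq(1)[OF bF bG[OF that]]] .
  have bA: "bddon ?P (\<lambda>x. \<integral>y. (F (x(n:=y)))\<^sup>2 \<partial>U) (B^2)"
    using inner_bdd[OF U bddon_sq(2)[OF bF bF]] .
  have bD: "bddon ?P (\<lambda>x. \<integral>y. (F (x(n:=y)) - G m (x(n:=y)))\<^sup>2 \<partial>U) ((2*B)^2)"
    if "m < Suc n" for m
    using inner_bdd[OF U bddon_sq(1)[OF bF bG[OF that]]] .
  have p1: "(\<integral>y. (F (x(n:=y)))\<^sup>2 \<partial>U) - (Fb x)\<^sup>2 \<le> (\<integral>y. (F (x(n:=y)) - G n (x(n:=y)))\<^sup>2 \<partial>U)"
    if x: "x \<in> space ?P" for x
  proof -
    obtain y0 where y0: "y0 \<in> space U" using U.not_empty by blast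
    define c where "c = G n (x(n:=y0))"
    have "G n (x(n:=y)) = c" if y: "y \<in> space U" for y
    proof -
      have "G n ((x(n:=y0))(n:=y)) = G n (x(n:=y0))"
        by (rule Suc.prems(3)) (use upd_space[OF x y0] y in \<open>auto simp del: fun_upd_apply\<close>)
      then show ?thesis unfolding c_def by simp
    qed
    then have "(\<integral>y. (F (x(n:=y)) - G n (x(n:=y)))\<^sup>2 \<partial>U) = (\<integral>y. (F (x(n:=y)) - c)\<^sup>2 \<partial>U)"
      by (intro Bochner_Integration.integral_cong) auto
    moreover have "(\<integral>y. (F (x(n:=y)))\<^sup>2 \<partial>U) - (Fb x)\<^sup>2 \<le> (\<integral>y. (F (x(n:=y)) - c)\<^sup>2 \<partial>U)"
      unfolding Fb_def using inner_bdd_pt[OF U bF x] by (intro var_min[OF U]) auto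
    ultimately show ?thesis by simp
  qed
  have p2: "(Fb x - Gb m x)\<^sup>2 \<le> (\<integral>y. (F (x(n:=y)) - G m (x(n:=y)))\<^sup>2 \<partial>U)"
    if x: "x \<in> space ?P" and m: "m < Suc n" for x m
  proof -
    note a = inner_bdd_pt[OF U bF x] and b = inner_bdd_pt[OF U bG[OF m] x]
    have "Fb x - Gb m x = (\<integral>y. F (x(n:=y)) - G m (x(n:=y)) \<partial>U)"
      unfolding Fb_def Gb_def using a b
      by (subst Bochner_Integration.integral_diff) (auto intro: bdd_integrable[OF U])
    moreover have "(\<integral>y. F (x(n:=y)) - G m (x(n:=y)) \<partial>U)\<^sup>2 \<le> (\<integral>y. (F (x(n:=y)) - G m (x(n:=y)))\<^sup>2 \<partial>U)"
      using a b by (intro jensen_sq[OF U, of _ "2*B"]) (auto, smt (verit))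
    ultimately show ?thesis by simp
  qed
  have iA: "integrable ?P (\<lambda>x. \<integral>y. (F (x(n:=y)))\<^sup>2 \<partial>U)" using bddon_integrable[OF psP bA] .
  have iFb2: "integrable ?P (\<lambda>x. (Fb x)\<^sup>2)" using bddon_integrable[OF psP bddon_sq(2)[OF bFb bFb]] .
  have iD: "integrable ?P (\<lambda>x. \<integral>y. (F (x(n:=y)) - G m (x(n:=y)))\<^sup>2 \<partial>U)" if "m < Suc n" for m
    using bddon_integrable[OF psP bD[OF that]] .
  have iFG: "integrable ?P (\<lambda>x. (Fb x - Gb m x)\<^sup>2)" if "m < n" for m
    using bddon_integrable[OF psP bddon_sq(1)[OF bFb bGb[OF that]]] .
  have "(\<integral>x. (F x)\<^sup>2 \<partial>?Q) - (\<integral>x. F x \<partial>?Q)\<^sup>2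
      = (\<integral>x. (\<integral>y. (F (x(n:=y)))\<^sup>2 \<partial>U) - (Fb x)\<^sup>2 \<partial>?P)
        + ((\<integral>x. (Fb x)\<^sup>2 \<partial>?P) - (\<integral>x. Fb x \<partial>?P)\<^sup>2)"
    unfolding e1 e2 using iA iFb2 by (simp add: integral_diff)
  also have "\<dots> \<le> (\<integral>x. (\<integral>y. (F (x(n:=y)) - G n (x(n:=y)))\<^sup>2 \<partial>U) \<partial>?P)
        + (\<Sum>m<n. \<integral>x. (\<integral>y. (F (x(n:=y)) - G m (x(n:=y)))\<^sup>2 \<partial>U) \<partial>?P)"
  proof (intro add_mono order.trans[OF IH] sum_mono)
    show "(\<integral>x. (\<integral>y. (F (x(n:=y)))\<^sup>2 \<partial>U) - (Fb x)\<^sup>2 \<partial>?P)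
        \<le> (\<integral>x. (\<integral>y. (F (x(n:=y)) - G n (x(n:=y)))\<^sup>2 \<partial>U) \<partial>?P)"
      using iA iFb2 iD[of n] p1 by (intro integral_mono) auto
    fix m assume "m \<in> {..<n}"
    then show "(\<integral>x. (Fb x - Gb m x)\<^sup>2 \<partial>?P) \<le> (\<integral>x. (\<integral>y. (F (x(n:=y)) - G m (x(n:=y)))\<^sup>2 \<partial>U) \<partial>?P)"
      using iFG iD p2 by (intro integral_mono) auto
  qed
  also have "\<dots> = (\<Sum>m<Suc n. \<integral>x. (F x - G m x)\<^sup>2 \<partial>?Q)"
    using e3 by (simp add: add.commute)
  finally show ?case .
qed




lemma open_sets_PiM:
  fixes Q :: "(nat \<Rightarrow> 'a::{metric_space, second_countable_topology}) \<Rightarrow> bool"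
    and U :: "'a measure"
  assumes sU: "sets U = sets borel"
  and op: "\<And>\<eta>. \<eta> \<in> space (PiM {..<n} (\<lambda>_. U)) \<Longrightarrow> Q \<eta> \<Longrightarrow>
      \<exists>e>0. \<forall>\<eta>'\<in>space (PiM {..<n} (\<lambda>_. U)). (\<forall>i<n. dist (\<eta>' i) (\<eta> i) < e) \<longrightarrow> Q \<eta>'"
  shows "{\<eta>\<in>space (PiM {..<n} (\<lambda>_. U)). Q \<eta>} \<in> sets (PiM {..<n} (\<lambda>_. U))"
proof -
  let ?P = "PiM {..<n} (\<lambda>_. U)"
  obtain D :: "'a set" where D: "countable D" "\<And>X. open X \<Longrightarrow> X \<noteq> {} \<Longrightarrow> \<exists>d\<in>D. d \<in> X"
    by (erule countable_dense_setE)
  define box where "box q k = {\<eta>\<in>space ?P. \<forall>i\<in>{..<n}. dist (\<eta> i) (q i) < 1 / real (Suc k)}"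
    for q :: "nat \<Rightarrow> 'a" and k :: nat
  define Idx where "Idx = {(q,k). q \<in> PiE {..<n} (\<lambda>_. D) \<and> box q k \<subseteq> {\<eta>\<in>space ?P. Q \<eta>}}"
  have eq: "{\<eta>\<in>space ?P. Q \<eta>} = (\<Union>p\<in>Idx. box (fst p) (snd p))"
  proof
    show "(\<Union>p\<in>Idx. box (fst p) (snd p)) \<subseteq> {\<eta>\<in>space ?P. Q \<eta>}"
      unfolding Idx_def by auto
    show "{\<eta>\<in>space ?P. Q \<eta>} \<subseteq> (\<Union>p\<in>Idx. box (fst p) (snd p))"
    proof safe
      fix \<eta> assume \<eta>: "\<eta> \<in> space ?P" "Q \<eta>"
      obtain e where e: "e > 0" "\<forall>\<eta>'\<in>space ?P. (\<forall>i<n. dist (\<eta>' i) (\<eta> i) < e) \<longrightarrow> Q \<eta>'"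
        using op[OF \<eta>] by blast
      obtain k where k: "inverse (real (Suc k)) < e/2" using reals_Archimedean[of "e/2"] e by auto
      define r where "r = 1 / real (Suc k)"
      have r: "r > 0" "2*r < e" using k unfolding r_def by (auto simp: field_simps)
      have "\<exists>d\<in>D. d \<in> ball (\<eta> i) r" for i using D(2)[of "ball (\<eta> i) r"] r by auto
      then obtain f where f: "\<And>i. f i \<in> D \<and> dist (\<eta> i) (f i) < r" by (metis mem_ball)
      define q where "q i = (if i < n then f i else undefined)" for i
      have q: "q \<in> PiE {..<n} (\<lambda>_. D)" using f unfolding q_def by (auto simp: PiE_def extensional_def)
      have inbox: "\<eta> \<in> box q k" using \<eta> f unfolding box_def q_def r_def by (auto simp: dist_commute)
      have "box q k \<subseteq> {\<eta>\<in>space ?P. Q \<eta>}"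
      proof safe
        fix \<eta>' assume b: "\<eta>' \<in> box q k"
        then show sp: "\<eta>' \<in> space ?P" unfolding box_def by auto
        have "dist (\<eta>' i) (\<eta> i) < e" if i: "i < n" for i
        proof -
          have "dist (\<eta>' i) (\<eta> i) \<le> dist (\<eta>' i) (q i) + dist (q i) (\<eta> i)" by (rule dist_triangle)
          also have "\<dots> < r + r" using b f[of i] i unfolding box_def q_def r_def
            by (intro add_strict_mono) (auto simp: dist_commute)
          finally show ?thesis using r by auto
        qed
        then show "Q \<eta>'" using e(2) sp by blast
      qed
      then have "(q,k) \<in> Idx" using q unfolding Idx_def by auto
      then show "\<eta> \<in> (\<Union>p\<in>Idx. box (fst p) (snd p))" using inbox by force
    qed
  qed
  have cI: "countable Idx"
  proof (rule countable_subset)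
    show "Idx \<subseteq> PiE {..<n} (\<lambda>_. D) \<times> UNIV" unfolding Idx_def by auto
    show "countable (PiE {..<n} (\<lambda>_. D) \<times> (UNIV :: nat set))"
      using D(1) by (intro countable_SIGMA countable_PiE) auto
  qed
  have mb: "box q k \<in> sets ?P" for q k
  proof -
    have "Measurable.pred ?P (\<lambda>\<eta>. \<forall>i\<in>{..<n}. dist (\<eta> i) (q i) < 1 / real (Suc k))"
    proof (intro pred_intros_finite)
      fix i assume i: "i \<in> {..<n}"
      have m: "(\<lambda>\<eta>. \<eta> i) \<in> measurable ?P borel"
        using measurable_component_singleton[OF i, of "\<lambda>_. U"] sU
        by (simp add: measurable_def)
      show "Measurable.pred ?P (\<lambda>\<eta>. dist (\<eta> i) (q i) < 1 / real (Suc k))"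
        using m by measurable
    qed simp
    then show ?thesis unfolding box_def pred_def .
  qed
  show ?thesis unfolding eq
    using cI mb by (intro sets.countable_UN') auto
qed




definition cellS :: "point set \<Rightarrow> nat set \<Rightarrow> (nat \<Rightarrow> point) \<Rightarrow> nat \<Rightarrow> point set" where
  "cellS R S eta u = {x \<in> R. \<forall>v\<in>S. norm (eta u - x) \<le> norm (eta v - x)}"

definition crossS :: "real \<Rightarrow> real \<Rightarrow> real \<Rightarrow> real \<Rightarrow> nat set \<Rightarrow> (nat \<Rightarrow> point) \<Rightarrow> (nat \<Rightarrow> int) \<Rightarrow> bool" where
  "crossS a b c d S eta omega \<longleftrightarrow>
     (\<exists>\<gamma>. path \<gamma> \<and> path_image \<gamma> \<subseteq> rect a b c d \<and>
        pathstart \<gamma> \<in> {a} \<times> {c..d} \<and> pathfinish \<gamma> \<in> {b} \<times> {c..d} \<and>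
        (\<forall>u\<in>S. path_image \<gamma> \<inter> cellS (rect a b c d) S eta u \<noteq> {} \<longrightarrow> omega u = 1))"

lemma crossing_eq: "crossing a b c d n eta omega = crossS a b c d {..<n} eta omega"
proof -
  have "voronoi_cell R n eta m = cellS R {..<n} eta m" for R m
    unfolding voronoi_cell_def cellS_def by auto
  then show ?thesis unfolding crossing_def crossS_def by (simp add: Ball_def)
qed

lemma crossS_omega_cong:
  assumes "\<forall>u\<in>S. omega u = omega' u"
  shows "crossS a b c d S eta omega = crossS a b c d S eta omega'"
  using assms unfolding crossS_def by simp

lemma crossS_eta_cong:
  assumes "\<forall>u\<in>S. eta u = eta' u"
  shows "crossS a b c d S eta omega = crossS a b c d S eta' omega"
proof -
  have "cellS R S eta u = cellS R S eta' u" if "u \<in> S" for R u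
    using assms that unfolding cellS_def by auto
  then have "(\<forall>u\<in>S. P \<inter> cellS R S eta u \<noteq> {} \<longrightarrow> omega u = 1) \<longleftrightarrow>
      (\<forall>u\<in>S. P \<inter> cellS R S eta' u \<noteq> {} \<longrightarrow> omega u = 1)" for P R by auto
  then show ?thesis unfolding crossS_def by simp
qed

lemma mono1:
  assumes m: "m < n" and om: "omega m = 1"
    and cr: "crossS a b c d ({..<n} - {m}) eta omega"
  shows "crossS a b c d {..<n} eta omega"
proof -
  let ?S = "{..<n} - {m}"
  obtain \<gamma> where g: "path \<gamma>" "path_image \<gamma> \<subseteq> rect a b c d"
      "pathstart \<gamma> \<in> {a} \<times> {c..d}" "pathfinish \<gamma> \<in> {b} \<times> {c..d}"
      "\<forall>u\<in>?S. path_image \<gamma> \<inter> cellS (rect a b c d) ?S eta u \<noteq> {} \<longrightarrow> omega u = 1"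
    using cr unfolding crossS_def by (elim exE conjE) (rule that, assumption+)
  have "omega u = 1" if u: "u \<in> {..<n}" and ne: "path_image \<gamma> \<inter> cellS (rect a b c d) {..<n} eta u \<noteq> {}" for u
  proof (cases "u = m")
    case True then show ?thesis using om by simp
  next
    case False
    have "cellS (rect a b c d) {..<n} eta u \<subseteq> cellS (rect a b c d) ?S eta u"
      unfolding cellS_def by auto
    then have "path_image \<gamma> \<inter> cellS (rect a b c d) ?S eta u \<noteq> {}" using ne by blast
    moreover have "u \<in> ?S" using u False by simp
    ultimately show ?thesis using g(5) by simp
  qed
  then have *: "\<forall>u\<in>{..<n}. path_image \<gamma> \<inter> cellS (rect a b c d) {..<n} eta u \<noteq> {} \<longrightarrow> omega u = 1"
    by blast
  show ?thesis unfolding crossS_def apply (intro exI[of _ \<gamma>] conjI) using g(1-4) * by auto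
qed

lemma mono2:
  assumes m: "m < n" and om: "omega m \<noteq> 1"
    and cr: "crossS a b c d {..<n} eta omega"
  shows "crossS a b c d ({..<n} - {m}) eta omega"
proof -
  let ?S = "{..<n} - {m}" and ?R = "rect a b c d"
  obtain \<gamma> where g: "path \<gamma>" "path_image \<gamma> \<subseteq> ?R"
      "pathstart \<gamma> \<in> {a} \<times> {c..d}" "pathfinish \<gamma> \<in> {b} \<times> {c..d}"
      "\<forall>u\<in>{..<n}. path_image \<gamma> \<inter> cellS ?R {..<n} eta u \<noteq> {} \<longrightarrow> omega u = 1"
    using cr unfolding crossS_def by (elim exE conjE) (rule that, assumption+)
  have "omega u = 1" if u: "u \<in> ?S" and ne: "path_image \<gamma> \<inter> cellS ?R ?S eta u \<noteq> {}" for u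
  proof -
    obtain x where x: "x \<in> path_image \<gamma>" "x \<in> cellS ?R ?S eta u" using ne by blast
    have "x \<notin> cellS ?R {..<n} eta m" using g(5) x(1) m om by blast
    moreover have xR: "x \<in> ?R" using x unfolding cellS_def by auto
    ultimately obtain v where v: "v < n" "norm (eta v - x) < norm (eta m - x)"
      unfolding cellS_def by (auto simp: not_le)
    have vm: "v \<noteq> m" using v by auto
    have "norm (eta u - x) \<le> norm (eta v - x)" using x(2) v vm unfolding cellS_def by auto
    have "norm (eta u - x) \<le> norm (eta w - x)" if "w < n" for w
    proof (cases "w = m")
      case True then show ?thesis using \<open>norm (eta u - x) \<le> norm (eta v - x)\<close> v by simp
    next
      case False then show ?thesis using x(2) that unfolding cellS_def by simp
    qed
    then have "x \<in> cellS ?R {..<n} eta u" using xR unfolding cellS_def by simp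
    then have "path_image \<gamma> \<inter> cellS ?R {..<n} eta u \<noteq> {}" using x(1) by blast
    then show ?thesis using g(5) u by simp
  qed
  then have *: "\<forall>u\<in>?S. path_image \<gamma> \<inter> cellS ?R ?S eta u \<noteq> {} \<longrightarrow> omega u = 1"
    by blast
  show ?thesis unfolding crossS_def apply (intro exI[of _ \<gamma>] conjI) using g(1-4) * by auto
qed

lemma norm_shift_diff:
  fixes p p' x :: point
  shows "\<bar>norm (p' - x) - norm (p - x)\<bar> \<le> dist p' p"
proof -
  have "\<bar>norm (p' - x) - norm (p - x)\<bar> \<le> norm ((p' - x) - (p - x))" by (rule norm_triangle_ineq3)
  also have "(p' - x) - (p - x) = p' - p" by simp
  finally show ?thesis by (simp add: dist_norm)
qed

lemma avoid_stable:
  fixes K :: "point set"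
  assumes K: "compact K" "K \<noteq> {}" "K \<subseteq> R" and S: "finite S" "u \<in> S"
    and dis: "K \<inter> cellS R S eta u = {}"
  shows "\<exists>e>0. \<forall>eta'. (\<forall>i\<in>S. dist (eta' i) (eta i) < e) \<longrightarrow> K \<inter> cellS R S eta' u = {}"
proof -
  define h where "h (eta' :: nat \<Rightarrow> point) (x :: point) = (\<Sum>v\<in>S. max 0 (norm (eta' u - x) - norm (eta' v - x)))" for eta' x
  have pos: "h eta x > 0" if x: "x \<in> K" for x
  proof -
    have "x \<notin> cellS R S eta u" using dis x by blast
    then obtain v where v: "v \<in> S" "norm (eta v - x) < norm (eta u - x)"
      using x K(3) unfolding cellS_def by (auto simp: not_le)
    have "0 < max 0 (norm (eta u - x) - norm (eta v - x))" using v by simp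
    also have "\<dots> \<le> h eta x" unfolding h_def
      by (rule member_le_sum[OF v(1) _ S(1)]) simp
    finally show ?thesis .
  qed
  have cont: "continuous_on K (h eta)" unfolding h_def by (intro continuous_intros)
  obtain x0 where x0: "x0 \<in> K" "\<And>y. y \<in> K \<Longrightarrow> h eta x0 \<le> h eta y"
    using continuous_attains_inf[OF K(1) K(2) cont] by blast
  define \<delta> where "\<delta> = h eta x0"
  have \<delta>: "\<delta> > 0" using pos[OF x0(1)] unfolding \<delta>_def .
  have cS: "card S > 0" using S card_gt_0_iff by blast
  define e where "e = \<delta> / (4 * real (card S))"
  have e: "e > 0" using \<delta> cS unfolding e_def by simp
  have "K \<inter> cellS R S eta' u = {}" if cl: "\<forall>i\<in>S. dist (eta' i) (eta i) < e" for eta'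
  proof (rule ccontr)
    assume "K \<inter> cellS R S eta' u \<noteq> {}"
    then obtain x where x: "x \<in> K" "x \<in> cellS R S eta' u" by blast
    have le0: "max 0 (norm (eta' u - x) - norm (eta' v - x)) = 0" if v: "v \<in> S" for v
      using x(2) v unfolding cellS_def by auto
    have "max 0 (norm (eta u - x) - norm (eta v - x)) - 2 * e \<le> max 0 (norm (eta' u - x) - norm (eta' v - x))"
      if v: "v \<in> S" for v
    proof -
      have "\<bar>norm (eta' u - x) - norm (eta u - x)\<bar> < e"
        using norm_shift_diff[of "eta' u" x "eta u"] cl S(2) by fastforce
      moreover have "\<bar>norm (eta' v - x) - norm (eta v - x)\<bar> < e"
        using norm_shift_diff[of "eta' v" x "eta v"] cl v by fastforce
      ultimately show ?thesis by linarith
    qed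
    then have "(\<Sum>v\<in>S. max 0 (norm (eta u - x) - norm (eta v - x)) - 2 * e) \<le> (\<Sum>v\<in>S. max 0 (norm (eta' u - x) - norm (eta' v - x)))"
      by (intro sum_mono) auto
    also have "\<dots> = 0" using le0 by simp
    finally have "h eta x - real (card S) * (2 * e) \<le> 0" unfolding h_def by (simp add: sum_subtractf)
    moreover have "real (card S) * (2 * e) = \<delta> / 2" unfolding e_def using cS by (simp add: field_simps)
    moreover have "\<delta> \<le> h eta x" unfolding \<delta>_def using x0(2) x(1) .
    ultimately show False using \<delta> by linarith
  qed
  then show ?thesis using e by blast
qed

lemma cross_stable:
  assumes S: "finite S" and cr: "crossS a b c d S eta omega"
  shows "\<exists>e>0. \<forall>eta'. (\<forall>i\<in>S. dist (eta' i) (eta i) < e) \<longrightarrow> crossS a b c d S eta' omega"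
proof -
  let ?R = "rect a b c d"
  obtain \<gamma> where g: "path \<gamma>" "path_image \<gamma> \<subseteq> ?R"
      "pathstart \<gamma> \<in> {a} \<times> {c..d}" "pathfinish \<gamma> \<in> {b} \<times> {c..d}"
      "\<forall>u\<in>S. path_image \<gamma> \<inter> cellS ?R S eta u \<noteq> {} \<longrightarrow> omega u = 1"
    using cr unfolding crossS_def by (elim exE conjE) (rule that, assumption+)
  let ?K = "path_image \<gamma>"
  have K: "compact ?K" "?K \<noteq> {}" "?K \<subseteq> ?R"
    using g(1,2) by (auto simp: compact_path_image path_image_nonempty)
  define B where "B = {u\<in>S. omega u \<noteq> 1}"
  have fB: "finite B" using S unfolding B_def by simp
  have "\<forall>u\<in>B. \<exists>e>0. \<forall>eta'. (\<forall>i\<in>S. dist (eta' i) (eta i) < e) \<longrightarrow> ?K \<inter> cellS ?R S eta' u = {}"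
  proof
    fix u assume u: "u \<in> B"
    then have uS: "u \<in> S" and om: "omega u \<noteq> 1" unfolding B_def by auto
    then have "?K \<inter> cellS ?R S eta u = {}" using g(5) by auto
    from avoid_stable[OF K S uS this]
    show "\<exists>e>0. \<forall>eta'. (\<forall>i\<in>S. dist (eta' i) (eta i) < e) \<longrightarrow> ?K \<inter> cellS ?R S eta' u = {}" .
  qed
  from bchoice[OF this] obtain E where
    E0: "\<forall>u\<in>B. E u > 0 \<and> (\<forall>eta'. (\<forall>i\<in>S. dist (eta' i) (eta i) < E u) \<longrightarrow> ?K \<inter> cellS ?R S eta' u = {})"
    by (elim exE) simp
  have E: "\<And>u. u \<in> B \<Longrightarrow> E u > 0"
    "\<And>u eta'. u \<in> B \<Longrightarrow> (\<forall>i\<in>S. dist (eta' i) (eta i) < E u) \<Longrightarrow> ?K \<inter> cellS ?R S eta' u = {}"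
    using E0 by auto
  define e where "e = Min (insert 1 (E ` B))"
  have e: "e > 0" unfolding e_def using fB E(1) by (subst Min_gr_iff) auto
  have eE: "e \<le> E u" if "u \<in> B" for u unfolding e_def using fB that by (intro Min_le) auto
  have "crossS a b c d S eta' omega" if cl: "\<forall>i\<in>S. dist (eta' i) (eta i) < e" for eta'
  proof -
    have *: "\<forall>u\<in>S. ?K \<inter> cellS ?R S eta' u \<noteq> {} \<longrightarrow> omega u = 1"
    proof (intro ballI impI, rule ccontr)
      fix u assume u: "u \<in> S" and ne: "?K \<inter> cellS ?R S eta' u \<noteq> {}" and om: "omega u \<noteq> 1"
      then have uB: "u \<in> B" unfolding B_def by simp
      have "\<forall>i\<in>S. dist (eta' i) (eta i) < E u" using cl eE[OF uB] by fastforce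
      then show False using E(2)[OF uB] ne by blast
    qed
    show ?thesis unfolding crossS_def apply (intro exI[of _ \<gamma>] conjI) using g(1-4) * by auto
  qed
  then show ?thesis using e by blast
qed




lemma rect_measure:
  assumes "a < b" "c < d"
  shows "emeasure lborel (rect a b c d) = ennreal ((b - a) * (d - c))"
proof -
  have "emeasure lborel (rect a b c d) = emeasure (lborel \<Otimes>\<^sub>M lborel) ({a..b} \<times> {c..d})"
    unfolding rect_def by (simp add: lborel_prod)
  also have "\<dots> = emeasure lborel {a..b} * emeasure lborel {c..d}"
    by (intro lborel.emeasure_pair_measure_Times) auto
  also have "\<dots> = ennreal ((b - a) * (d - c))" using assms by (simp add: ennreal_mult)
  finally show ?thesis .
qed

lemma U_prob:
  assumes "a < b" "c < d"
  shows "prob_space (uniform_measure lborel (rect a b c d))"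
  using assms rect_measure[OF assms] by (intro prob_space_uniform_measure) auto

lemma U_sets: "sets (uniform_measure lborel (rect a b c d)) = sets (borel :: point measure)"
  by simp

lemma cross_pred:
  assumes S: "S \<subseteq> {..<n}"
  shows "Measurable.pred (point_measure a b c d n) (\<lambda>\<eta>. crossS a b c d S \<eta> \<omega>)"
  unfolding pred_def point_measure_def
proof (rule open_sets_PiM[OF U_sets])
  fix \<eta> assume "crossS a b c d S \<eta> \<omega>"
  from cross_stable[OF finite_subset[OF S] this] obtain e where
    e: "e > 0" "\<forall>eta'. (\<forall>i\<in>S. dist (eta' i) (\<eta> i) < e) \<longrightarrow> crossS a b c d S eta' \<omega>" by blast
  then show "\<exists>e>0. \<forall>\<eta>'\<in>space (PiM {..<n} (\<lambda>_. uniform_measure lborel (rect a b c d))).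
      (\<forall>i<n. dist (\<eta>' i) (\<eta> i) < e) \<longrightarrow> crossS a b c d S \<eta>' \<omega>"
    using S by (intro exI[of _ e]) auto
qed


lemma ind_meas:
  assumes "S \<subseteq> {..<n}"
  shows "(\<lambda>\<eta>. if crossS a b c d S \<eta> \<omega> then 1 else 0 :: real) \<in> borel_measurable (point_measure a b c d n)"
  using cross_pred[OF assms] by (intro measurable_If) (auto simp: pred_def)

lemma fR_eq: "fR a b c d n \<eta> \<omega> = (if crossS a b c d {..<n} \<eta> \<omega> then 1 else 0)"
  unfolding fR_def crossing_eq ..

lemma fR_meas: "(\<lambda>\<eta>. fR a b c d n \<eta> \<omega>) \<in> borel_measurable (point_measure a b c d n)"
  unfolding fR_eq by (rule ind_meas) simp

lemma card_col: "finite (colourings n)" "card (colourings n) > 0"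
proof -
  show f: "finite (colourings n)" unfolding colourings_def by (intro finite_PiE) auto
  have "(\<lambda>i. if i < n then 1 else undefined) \<in> colourings n" unfolding colourings_def
    by (auto simp: PiE_def extensional_def)
  then show "card (colourings n) > 0" using f card_gt_0_iff by blast
qed

lemma flip_col:
  assumes "m < n" "\<omega> \<in> colourings n"
  shows "flip m \<omega> \<in> colourings n" "flip m (flip m \<omega>) = \<omega>"
proof -
  have w: "\<omega> m \<in> {-1,1}" "\<And>i. i < n \<Longrightarrow> \<omega> i \<in> {-1,1}" "\<And>i. \<not> i < n \<Longrightarrow> \<omega> i = undefined"
    using assms unfolding colourings_def by (auto simp: PiE_def extensional_def Pi_def)
  have "- \<omega> m \<in> {-1,1}" using w(1) by auto
  then show "flip m \<omega> \<in> colourings n" using w assms(1) unfolding colourings_def flip_def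
    by (auto simp: PiE_def extensional_def Pi_def)
  show "flip m (flip m \<omega>) = \<omega>" unfolding flip_def by simp
qed

lemma key_ineq:
  fixes A A' Bs :: bool
  assumes "Bs \<longrightarrow> A" "A' \<longrightarrow> Bs"
  shows "\<bar>(if A then 1 else 0) + (if A' then 1 else 0) - 2 * (if Bs then 1 else 0 :: real)\<bar>
          \<le> (if A \<noteq> A' then 1 else 0)"
  using assms by auto

definition Gm :: "real \<Rightarrow> real \<Rightarrow> real \<Rightarrow> real \<Rightarrow> nat \<Rightarrow> nat \<Rightarrow> (nat \<Rightarrow> point) \<Rightarrow> real" where
  "Gm a b c d n m \<eta> = (\<Sum>\<omega>\<in>colourings n. if crossS a b c d ({..<n} - {m}) \<eta> \<omega> then 1 else 0) / real (card (colourings n))"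

lemma pointwise:
  assumes m: "m < n"
  shows "\<bar>cond_prob_H a b c d n \<eta> - Gm a b c d n m \<eta>\<bar> \<le> influence a b c d n m \<eta> / 2"
proof -
  let ?C = "colourings n" and ?S = "{..<n} - {m}"
  define fr where "fr \<omega> = (if crossS a b c d {..<n} \<eta> \<omega> then 1 else 0 :: real)" for \<omega>
  define fs where "fs \<omega> = (if crossS a b c d ?S \<eta> \<omega> then 1 else 0 :: real)" for \<omega>
  define dd where "dd \<omega> = (if crossS a b c d {..<n} \<eta> \<omega> \<noteq> crossS a b c d {..<n} \<eta> (flip m \<omega>) then 1 else 0 :: real)" for \<omega>
  have fC: "finite ?C" and cC: "card ?C > 0" using card_col by auto
  have fsflip: "crossS a b c d ?S \<eta> (flip m \<omega>) = crossS a b c d ?S \<eta> \<omega>" for \<omega>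
    by (rule crossS_omega_cong) (auto simp: flip_def)
  have r1: "(\<Sum>\<omega>\<in>?C. fr (flip m \<omega>)) = (\<Sum>\<omega>\<in>?C. fr \<omega>)"
    by (rule sum.reindex_bij_witness[of _ "flip m" "flip m"]) (auto simp: flip_col[OF m])
  have pt: "\<bar>fr \<omega> + fr (flip m \<omega>) - 2 * fs \<omega>\<bar> \<le> dd \<omega>" if w: "\<omega> \<in> ?C" for \<omega>
  proof -
    have "\<omega> m \<in> {-1, 1}" using w m unfolding colourings_def by auto
    then consider "\<omega> m = 1" | "\<omega> m = -1" by auto
    then show ?thesis
    proof cases
      case 1
      have fm: "flip m \<omega> m \<noteq> 1" using 1 by (simp add: flip_def)
      have "crossS a b c d ?S \<eta> \<omega> \<longrightarrow> crossS a b c d {..<n} \<eta> \<omega>" using mono1[where m=m and n=n and omega=\<omega> and eta=\<eta>, OF m 1] by blast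
      moreover have "crossS a b c d {..<n} \<eta> (flip m \<omega>) \<longrightarrow> crossS a b c d ?S \<eta> \<omega>"
        using mono2[where m=m and n=n and omega="flip m \<omega>" and eta=\<eta>, OF m fm] fsflip by blast
      ultimately show ?thesis unfolding fr_def fs_def dd_def by (rule key_ineq)
    next
      case 2
      have fm: "flip m \<omega> m = 1" using 2 by (simp add: flip_def)
      have om: "\<omega> m \<noteq> 1" using 2 by simp
      have "crossS a b c d ?S \<eta> \<omega> \<longrightarrow> crossS a b c d {..<n} \<eta> (flip m \<omega>)"
        using mono1[where m=m and n=n and omega="flip m \<omega>" and eta=\<eta>, OF m fm] fsflip by blast
      moreover have "crossS a b c d {..<n} \<eta> \<omega> \<longrightarrow> crossS a b c d ?S \<eta> \<omega>"
        using mono2[where m=m and n=n and omega=\<omega> and eta=\<eta>, OF m om] by blast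
      ultimately have "\<bar>fr (flip m \<omega>) + fr \<omega> - 2 * fs \<omega>\<bar> \<le> (if crossS a b c d {..<n} \<eta> (flip m \<omega>) \<noteq> crossS a b c d {..<n} \<eta> \<omega> then 1 else 0)"
        unfolding fr_def fs_def by (rule key_ineq)
      then show ?thesis unfolding dd_def by (simp add: add.commute eq_commute)
    qed
  qed
  have "2 * \<bar>(\<Sum>\<omega>\<in>?C. fr \<omega>) - (\<Sum>\<omega>\<in>?C. fs \<omega>)\<bar> = \<bar>(\<Sum>\<omega>\<in>?C. fr \<omega> + fr (flip m \<omega>) - 2 * fs \<omega>)\<bar>"
  proof -
    have s2: "(\<Sum>\<omega>\<in>?C. 2 * fs \<omega>) = 2 * (\<Sum>\<omega>\<in>?C. fs \<omega>)" by (rule sum_distrib_left[symmetric])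
    have "(\<Sum>\<omega>\<in>?C. fr \<omega> + fr (flip m \<omega>) - 2 * fs \<omega>) = 2 * ((\<Sum>\<omega>\<in>?C. fr \<omega>) - (\<Sum>\<omega>\<in>?C. fs \<omega>))"
      by (simp only: sum_subtractf sum.distrib r1 s2) simp
    moreover have "\<bar>2 * ((\<Sum>\<omega>\<in>?C. fr \<omega>) - (\<Sum>\<omega>\<in>?C. fs \<omega>))\<bar> = 2 * \<bar>(\<Sum>\<omega>\<in>?C. fr \<omega>) - (\<Sum>\<omega>\<in>?C. fs \<omega>)\<bar>"
      by (simp only: abs_mult)
    ultimately show ?thesis by (simp only:)
  qed
  also have "\<dots> \<le> (\<Sum>\<omega>\<in>?C. \<bar>fr \<omega> + fr (flip m \<omega>) - 2 * fs \<omega>\<bar>)" by (rule sum_abs)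
  also have "\<dots> \<le> (\<Sum>\<omega>\<in>?C. dd \<omega>)" using pt by (intro sum_mono) auto
  also have "\<dots> = real (card {\<omega>\<in>?C. fR a b c d n \<eta> \<omega> \<noteq> fR a b c d n \<eta> (flip m \<omega>)})"
  proof -
    have "(\<Sum>\<omega>\<in>?C. dd \<omega>) = (\<Sum>\<omega>\<in>?C. if fR a b c d n \<eta> \<omega> \<noteq> fR a b c d n \<eta> (flip m \<omega>) then 1 else 0)"
      unfolding dd_def fR_eq by (intro sum.cong) auto
    also have "\<dots> = real (card {\<omega>\<in>?C. fR a b c d n \<eta> \<omega> \<noteq> fR a b c d n \<eta> (flip m \<omega>)})"
      using fC by (simp add: sum.If_cases Int_def conj_commute)
    finally show ?thesis .
  qed
  finally have *: "2 * \<bar>(\<Sum>\<omega>\<in>?C. fr \<omega>) - (\<Sum>\<omega>\<in>?C. fs \<omega>)\<bar> \<le> real (card {\<omega>\<in>?C. fR a b c d n \<eta> \<omega> \<noteq> fR a b c d n \<eta> (flip m \<omega>)})" .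
  have "cond_prob_H a b c d n \<eta> - Gm a b c d n m \<eta> = ((\<Sum>\<omega>\<in>?C. fr \<omega>) - (\<Sum>\<omega>\<in>?C. fs \<omega>)) / real (card ?C)"
    unfolding cond_prob_H_def Gm_def fr_def fs_def fR_eq by (simp add: diff_divide_distrib)
  then have "\<bar>cond_prob_H a b c d n \<eta> - Gm a b c d n m \<eta>\<bar> = \<bar>(\<Sum>\<omega>\<in>?C. fr \<omega>) - (\<Sum>\<omega>\<in>?C. fs \<omega>)\<bar> / real (card ?C)"
    by (simp add: abs_divide)
  also have "\<dots> \<le> (real (card {\<omega>\<in>?C. fR a b c d n \<eta> \<omega> \<noteq> fR a b c d n \<eta> (flip m \<omega>)}) / 2) / real (card ?C)"
    using * by (intro divide_right_mono) auto
  finally show ?thesis unfolding influence_def by simp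
qed


lemma avg_bdd:
  assumes "\<And>\<omega>. \<omega> \<in> colourings n \<Longrightarrow> 0 \<le> g \<omega> \<and> g \<omega> \<le> (1::real)"
  shows "\<bar>(\<Sum>\<omega>\<in>colourings n. g \<omega>) / real (card (colourings n))\<bar> \<le> 1"
proof -
  have "0 \<le> (\<Sum>\<omega>\<in>colourings n. g \<omega>)" using assms by (intro sum_nonneg) auto
  moreover have "(\<Sum>\<omega>\<in>colourings n. g \<omega>) \<le> (\<Sum>\<omega>\<in>colourings n. 1)" using assms by (intro sum_mono) auto
  ultimately show ?thesis using card_col by (auto simp: divide_le_eq_1)
qed

lemma F_bdd: "bddon (point_measure a b c d n) (cond_prob_H a b c d n) 1"
  unfolding bddon_def
proof
  show "cond_prob_H a b c d n \<in> borel_measurable (point_measure a b c d n)"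
    unfolding cond_prob_H_def[abs_def] using fR_meas by (intro borel_measurable_divide borel_measurable_sum) auto
  show "\<forall>x\<in>space (point_measure a b c d n). \<bar>cond_prob_H a b c d n x\<bar> \<le> 1"
    unfolding cond_prob_H_def by (intro ballI avg_bdd) (auto simp: fR_def)
qed

lemma G_bdd: "bddon (point_measure a b c d n) (Gm a b c d n m) 1"
  unfolding bddon_def
proof
  show "Gm a b c d n m \<in> borel_measurable (point_measure a b c d n)"
    unfolding Gm_def[abs_def] using ind_meas[of "{..<n} - {m}" n]
    by (intro borel_measurable_divide borel_measurable_sum) auto
  show "\<forall>x\<in>space (point_measure a b c d n). \<bar>Gm a b c d n m x\<bar> \<le> 1"
    unfolding Gm_def by (intro ballI avg_bdd) auto
qed

lemma G_ind: "Gm a b c d n m (x(m:=y)) = Gm a b c d n m x"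
proof -
  have "crossS a b c d ({..<n} - {m}) (x(m:=y)) \<omega> = crossS a b c d ({..<n} - {m}) x \<omega>" for \<omega>
    by (rule crossS_eta_cong) auto
  then show ?thesis unfolding Gm_def by simp
qed

lemma I_bdd: "bddon (point_measure a b c d n) (influence a b c d n m) 1"
  unfolding bddon_def
proof
  have eq: "influence a b c d n m x = (\<Sum>\<omega>\<in>colourings n. if fR a b c d n x \<omega> \<noteq> fR a b c d n x (flip m \<omega>) then 1 else 0) / real (card (colourings n))" for x
    unfolding influence_def using card_col(1) by (simp add: sum.If_cases Int_def conj_commute)
  have "(\<lambda>x. if fR a b c d n x \<omega> \<noteq> fR a b c d n x (flip m \<omega>) then 1 else 0 :: real) \<in> borel_measurable (point_measure a b c d n)" for \<omega>
  proof -
    have e2: "(fR a b c d n x \<omega> \<noteq> fR a b c d n x (flip m \<omega>)) = (\<not> (crossS a b c d {..<n} x \<omega> = crossS a b c d {..<n} x (flip m \<omega>)))" for x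
      unfolding fR_eq by auto
    note [measurable] = cross_pred[of "{..<n}" n a b c d, simplified]
    have "Measurable.pred (point_measure a b c d n) (\<lambda>x. \<not> (crossS a b c d {..<n} x \<omega> = crossS a b c d {..<n} x (flip m \<omega>)))"
      by measurable
    then show ?thesis unfolding e2 by (intro measurable_If) (auto simp: pred_def)
  qed
  then show "influence a b c d n m \<in> borel_measurable (point_measure a b c d n)"
    unfolding eq[abs_def] by (intro borel_measurable_divide borel_measurable_sum) auto
  show "\<forall>x\<in>space (point_measure a b c d n). \<bar>influence a b c d n m x\<bar> \<le> 1"
    unfolding eq by (intro ballI avg_bdd) auto
qed

theorem theorem2p1:
  fixes a b c d :: real and n :: nat
  assumes "a < b" and "c < d"
  shows "prob_space.variance (point_measure a b c d n) (cond_prob_H a b c d n)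
           \<le> (\<Sum>m<n. prob_space.expectation (point_measure a b c d n)
                          (\<lambda>eta. (influence a b c d n m eta)\<^sup>2))"
proof -
  let ?U = "uniform_measure lborel (rect a b c d)"
  let ?P = "point_measure a b c d n"
  let ?F = "cond_prob_H a b c d n"
  have U: "prob_space ?U" using U_prob[OF assms] .
  have psP: "prob_space ?P" unfolding point_measure_def using U by (intro prob_space_PiM) auto
  interpret P: prob_space ?P by (rule psP)
  have bF: "bddon ?P ?F 1" by (rule F_bdd)
  have iF: "integrable ?P ?F" using bddon_integrable[OF psP bF] .
  have iF2: "integrable ?P (\<lambda>x. (?F x)\<^sup>2)" using bddon_integrable[OF psP bddon_sq(2)[OF bF bF]] .
  have "P.variance ?F = (\<integral>x. (?F x)\<^sup>2 \<partial>?P) - (\<integral>x. ?F x \<partial>?P)\<^sup>2"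
    using P.variance_eq[OF iF iF2] .
  also have "\<dots> \<le> (\<Sum>m<n. \<integral>x. (?F x - Gm a b c d n m x)\<^sup>2 \<partial>?P)"
    unfolding point_measure_def
    by (rule efron_stein[OF U, of n ?F 1 "Gm a b c d n"])
       (use F_bdd G_bdd G_ind in \<open>auto simp: point_measure_def\<close>)
  also have "\<dots> \<le> (\<Sum>m<n. \<integral>x. (influence a b c d n m x)\<^sup>2 \<partial>?P)"
  proof (intro sum_mono integral_mono)
    fix m assume m: "m \<in> {..<n}"
    show "integrable ?P (\<lambda>x. (?F x - Gm a b c d n m x)\<^sup>2)"
      using bddon_integrable[OF psP bddon_sq(1)[OF bF G_bdd]] .
    show "integrable ?P (\<lambda>x. (influence a b c d n m x)\<^sup>2)"
      using bddon_integrable[OF psP bddon_sq(2)[OF I_bdd I_bdd]] .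
    fix x
    have p: "\<bar>?F x - Gm a b c d n m x\<bar> \<le> influence a b c d n m x / 2" using pointwise m by auto
    have "0 \<le> influence a b c d n m x" unfolding influence_def by simp
    then have "\<bar>?F x - Gm a b c d n m x\<bar> \<le> \<bar>influence a b c d n m x\<bar>" using p by linarith
    then show "(?F x - Gm a b c d n m x)\<^sup>2 \<le> (influence a b c d n m x)\<^sup>2"
      by (simp add: abs_le_square_iff)
  qed
  finally show ?thesis .
qed


end
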